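(* Let $X$ be a complete separable metric space and $d\ge1$. Any sequence of probability measures on $X\otimes\mathbb R^d$ whose marginals on $X$ form a uniformly tight family has a subsequence that converges weaguely (to some sub-probability measure on $X\otimes\mathbb R^d$).
   Context: A sequence $\lambda_n$ of sub-probability measures on $X\otimes\mathbb R^d$ converges weaguely to a sub-probability measure $\lambda$ if $\int F\,\mathrm d\lambda_n\to\int F\,\mathrm d\lambda$ for every continuous $F:X\otimes\mathbb R^d\to\mathbb R$ with $\lim_{|y|\to\infty}\sup_{x\in X}|F(x,y)|=0$. *)

theory Defs
  imports "HOL-Probability.Probability"
begin

definition uniformly_tight :: "(nat \<Rightarrow> 'a::topological_space measure) \<Rightarrow> bool" where
  "uniformly_tight \<mu> \<longleftrightarrow>
     (\<forall>e>0. \<exists>K. compact K \<and> (\<forall>n. measure (\<mu> n) (UNIV - K) < e))"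

definition weague_conv ::
  "(nat \<Rightarrow> ('a::topological_space \<times> 'b::real_normed_vector) measure) \<Rightarrow> ('a \<times> 'b) measure \<Rightarrow> bool" where
  "weague_conv L l \<longleftrightarrow>
     (\<forall>F :: 'a \<times> 'b \<Rightarrow> real.
        continuous_on UNIV F \<and> bounded (range F) \<and>
        (\<forall>e>0. \<exists>R. \<forall>x y. R \<le> norm y \<longrightarrow> \<bar>F (x, y)\<bar> < e) \<longrightarrow>
        (\<lambda>n. integral\<^sup>L (L n) F) \<longlonglongrightarrow> integral\<^sup>L l F)"

end

theory Submission
  imports Defs "HOL-Library.Nat_Bijection"
begin


definition bitz :: "real \<Rightarrow> nat \<Rightarrow> int" where
  "bitz u j = \<lfloor>2^(Suc j) * u\<rfloor> - 2 * \<lfloor>2^j * u\<rfloor>"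

lemma bitz_01: "bitz u j = 0 \<or> bitz u j = 1"
proof -
  define t where "t = 2^j * u"
  have e: "2^(Suc j) * u = 2 * t" by (simp add: t_def)
  have a: "2 * \<lfloor>t\<rfloor> \<le> \<lfloor>2 * t\<rfloor>" by (simp add: le_floor_iff)
  have b: "\<lfloor>2 * t\<rfloor> < 2 * \<lfloor>t\<rfloor> + 2"
    by (subst floor_less_iff) (use real_of_int_floor_add_one_gt[of t] in linarith)
  show ?thesis using a b unfolding bitz_def e t_def[symmetric] by linarith
qed

lemma bitz_partial: "(\<Sum>j<n. real_of_int (bitz u j) / 2^(Suc j)) = \<lfloor>2^n * u\<rfloor> / 2^n - \<lfloor>u\<rfloor>"
proof (induction n)
  case 0 then show ?case by simp
next
  case (Suc n)
  show ?case using Suc by (simp add: bitz_def field_simps)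
qed

lemma bin_expansion:
  assumes "0 \<le> u" "u < 1"
  shows "(\<lambda>j. real_of_int (bitz u j) / 2^(Suc j)) sums u"
proof -
  have fl: "\<lfloor>u\<rfloor> = 0" using assms by (simp add: floor_eq_iff)
  have lo: "u - (1/2)^n \<le> \<lfloor>2^n * u\<rfloor> / 2^n" for n :: nat
  proof -
    have "2^n * u - 1 \<le> \<lfloor>2^n * u\<rfloor>" by linarith
    then have "(2^n * u - 1) / 2^n \<le> \<lfloor>2^n * u\<rfloor> / 2^n" by (simp add: divide_right_mono)
    then show ?thesis by (simp add: field_simps power_divide)
  qed
  have hi: "\<lfloor>2^n * u\<rfloor> / 2^n \<le> u" for n :: nat
    by (simp add: divide_le_eq mult.commute)
  have l1: "(\<lambda>n. u - (1/2::real)^n) \<longlonglongrightarrow> u"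
    using tendsto_diff[OF tendsto_const LIMSEQ_realpow_zero[of "1/2::real"]] by simp
  have "(\<lambda>n. real_of_int \<lfloor>2^n * u\<rfloor> / 2^n) \<longlonglongrightarrow> u"
    by (rule tendsto_sandwich[OF _ _ l1 tendsto_const]) (auto intro: always_eventually lo hi)
  then show ?thesis unfolding sums_def bitz_partial fl by simp
qed

definition code :: "(nat \<Rightarrow> int) \<Rightarrow> real" where
  "code a = (\<Sum>m. (1 + real_of_int (a m)) / 4^(Suc m))"

definition bits01 :: "(nat \<Rightarrow> int) \<Rightarrow> bool" where
  "bits01 a \<longleftrightarrow> (\<forall>m. a m = 0 \<or> a m = 1)"

lemma geo4: "(\<lambda>m. 1 / 4^(Suc m) :: real) sums (1/3)"
proof -
  have "(\<lambda>m. (1/4) * (1/4::real)^m) sums ((1/4) * (1 / (1 - 1/4)))"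
    by (intro sums_mult geometric_sums) simp
  then show ?thesis by (simp add: power_divide)
qed

lemma code_sums:
  assumes "bits01 a"
  shows "(\<lambda>m. (1 + real_of_int (a m)) / 4^(Suc m)) sums code a"
    and "1/3 \<le> code a" "code a \<le> 2/3"
proof -
  have b: "0 \<le> a m" "a m \<le> 1" for m using assms unfolding bits01_def by (metis order.refl zero_le_one)+
  have g2: "(\<lambda>m. 2 * (1 / 4^(Suc m)) :: real) sums (2 * (1/3))" by (intro sums_mult geo4)
  have le2: "(1 + real_of_int (a m)) / 4^(Suc m) \<le> 2 * (1 / 4^(Suc m))" for m
  proof -
    have "(1 + real_of_int (a m)) / 4^(Suc m) \<le> 2 / 4^(Suc m)"
      by (rule divide_right_mono) (use b[of m] in auto)
    then show ?thesis by simp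
  qed
  have ge1: "1 / 4^(Suc m) \<le> (1 + real_of_int (a m)) / 4^(Suc m)" for m
    by (rule divide_right_mono) (use b[of m] in auto)
  have sm: "summable (\<lambda>m. (1 + real_of_int (a m)) / 4^(Suc m))"
    by (rule summable_comparison_test'[OF sums_summable[OF g2], of 0]) (use b le2 in \<open>auto\<close>)
  then show "(\<lambda>m. (1 + real_of_int (a m)) / 4^(Suc m)) sums code a"
    unfolding code_def by (simp add: summable_sums)
  show "1/3 \<le> code a" unfolding code_def
    by (rule sums_le[OF _ geo4 summable_sums[OF sm]]) (use ge1 in auto)
  show "code a \<le> 2/3" unfolding code_def
    using sums_le[OF _ summable_sums[OF sm] g2] le2 by auto
qed


lemma bits01_shift: "bits01 a \<Longrightarrow> bits01 (\<lambda>m. a (m + n))"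
  unfolding bits01_def by auto

lemma code_step:
  assumes "bits01 a"
  shows "4 * code a = (1 + real_of_int (a 0)) + code (\<lambda>m. a (Suc m))"
proof -
  have s1: "(\<lambda>m. (1 + real_of_int (a (Suc m))) / 4^(Suc (Suc m))) sums (code a - (1 + real_of_int (a 0)) / 4)"
    using sums_split_initial_segment[OF code_sums(1)[OF assms], of 1] by simp
  have s2: "(\<lambda>m. (1 + real_of_int (a (Suc m))) / 4^(Suc (Suc m))) sums (code (\<lambda>m. a (Suc m)) / 4)"
  proof -
    have "bits01 (\<lambda>m. a (Suc m))" using assms unfolding bits01_def by auto
    from sums_divide[OF code_sums(1)[OF this], of 4] show ?thesis by (simp add: field_simps)
  qed
  from sums_unique2[OF s1 s2] show ?thesis by (simp add: field_simps)
qed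

fun Nn :: "(nat \<Rightarrow> int) \<Rightarrow> nat \<Rightarrow> int" where
  "Nn a 0 = 0"
| "Nn a (Suc n) = 4 * Nn a n + (1 + a n)"

lemma code_pow:
  assumes "bits01 a"
  shows "4^n * code a = Nn a n + code (\<lambda>m. a (m + n))"
proof (induction n)
  case 0 then show ?case by simp
next
  case (Suc n)
  have "4^Suc n * code a = 4 * (4^n * code a)" by simp
  also have "\<dots> = 4 * Nn a n + 4 * code (\<lambda>m. a (m + n))" using Suc by simp
  also have "4 * code (\<lambda>m. a (m + n)) = (1 + a n) + code (\<lambda>m. a (m + Suc n))"
    using code_step[OF bits01_shift[OF assms, of n]] by simp
  finally show ?case by simp
qed

lemma floor_code_pow:
  assumes "bits01 a"
  shows "\<lfloor>4^n * code a\<rfloor> = Nn a n"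
proof -
  have "1/3 \<le> code (\<lambda>m. a (m + n))" "code (\<lambda>m. a (m + n)) \<le> 2/3"
    using code_sums[OF bits01_shift[OF assms]] by auto
  then show ?thesis unfolding code_pow[OF assms] by (simp add: floor_eq_iff)
qed

definition digit :: "real \<Rightarrow> nat \<Rightarrow> int" where
  "digit c n = \<lfloor>4^(Suc n) * c\<rfloor> - 4 * \<lfloor>4^n * c\<rfloor>"

lemma digit_code: "bits01 a \<Longrightarrow> digit (code a) n = 1 + a n"
  unfolding digit_def floor_code_pow by simp

definition Scode :: "real set" where
  "Scode = {c. 0 \<le> c \<and> c \<le> 1 \<and> (\<forall>n (k::int). 1/3 \<le> \<bar>4^n * c - k\<bar>)}"

lemma closed_Scode: "closed Scode"
proof -
  have "Scode = {c. 0 \<le> c} \<inter> {c. c \<le> 1} \<inter> (\<Inter>n. \<Inter>k::int. {c. 1/3 \<le> \<bar>4^n * c - k\<bar>})"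
    unfolding Scode_def by auto
  also have "closed \<dots>"
    by (intro closed_Int closed_INT ballI closed_Collect_le continuous_intros)
  finally show ?thesis .
qed

lemma code_in_Scode:
  assumes "bits01 a"
  shows "code a \<in> Scode"
proof -
  have "1/3 \<le> \<bar>4^n * code a - k\<bar>" for n and k :: int
  proof -
    have t: "1/3 \<le> code (\<lambda>m. a (m + n))" "code (\<lambda>m. a (m + n)) \<le> 2/3"
      using code_sums[OF bits01_shift[OF assms]] by auto
    show ?thesis
    proof (cases "Nn a n - k \<ge> 0")
      case True
      then have "real_of_int (Nn a n) - k \<ge> 0" by simp
      then show ?thesis unfolding code_pow[OF assms] using t by linarith
    next
      case False
      then have "real_of_int (Nn a n) - k \<le> -1" by simp
      then show ?thesis unfolding code_pow[OF assms] using t by linarith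
    qed
  qed
  moreover have "1/3 \<le> code a" "code a \<le> 2/3" using code_sums[OF assms] by auto
  ultimately show ?thesis unfolding Scode_def by auto
qed

lemma Scode_frac:
  assumes "c \<in> Scode"
  shows "\<lfloor>4^n * c\<rfloor> + 1/3 \<le> 4^n * c" "4^n * c \<le> \<lfloor>4^n * c\<rfloor> + 2/3"
proof -
  have all: "\<forall>n (k::int). 1/3 \<le> \<bar>4^n * c - k\<bar>" using assms unfolding Scode_def by blast
  have a: "1/3 \<le> \<bar>4^n * c - \<lfloor>4^n * c\<rfloor>\<bar>" "1/3 \<le> \<bar>4^n * c - (\<lfloor>4^n * c\<rfloor> + 1)\<bar>"
    using all[rule_format, of n "\<lfloor>4^n * c\<rfloor>"] all[rule_format, of n "\<lfloor>4^n * c\<rfloor> + 1"] by simp_all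
  have b: "\<lfloor>4^n * c\<rfloor> \<le> 4^n * c" "4^n * c < \<lfloor>4^n * c\<rfloor> + 1" by linarith+
  show "\<lfloor>4^n * c\<rfloor> + 1/3 \<le> 4^n * c" "4^n * c \<le> \<lfloor>4^n * c\<rfloor> + 2/3" using a b by linarith+
qed

lemma digit_Scode:
  assumes "c \<in> Scode"
  shows "digit c n = 1 \<or> digit c n = 2"
proof -
  define t where "t = 4^n * c"
  have e: "4^(Suc n) * c = 4 * t" by (simp add: t_def)
  have f: "\<lfloor>t\<rfloor> + 1/3 \<le> t" "t \<le> \<lfloor>t\<rfloor> + 2/3" using Scode_frac[OF assms, of n] by (simp_all add: t_def)
  have "4 * \<lfloor>t\<rfloor> + 1 \<le> \<lfloor>4 * t\<rfloor>" by (subst le_floor_iff) (use f in simp)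
  moreover have "\<lfloor>4 * t\<rfloor> < 4 * \<lfloor>t\<rfloor> + 3" by (subst floor_less_iff) (use f in simp)
  ultimately show ?thesis unfolding digit_def e t_def[symmetric] by linarith
qed

lemma isCont_floor_Scode:
  assumes "c \<in> Scode"
  shows "isCont (\<lambda>x. real_of_int \<lfloor>4^n * x\<rfloor>) c"
proof -
  have f: "\<lfloor>4^n * c\<rfloor> + 1/3 \<le> 4^n * c" "4^n * c \<le> \<lfloor>4^n * c\<rfloor> + 2/3" using Scode_frac[OF assms] by auto
  have "\<forall>\<^sub>F x in nhds c. real_of_int \<lfloor>4^n * x\<rfloor> = real_of_int \<lfloor>4^n * c\<rfloor>"
    unfolding eventually_nhds_metric
  proof (intro exI[of _ "1 / (3 * 4^n)"] conjI allI impI)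
    fix x assume "dist x c < 1 / (3 * 4^n)"
    then have "\<bar>x - c\<bar> < 1 / (3 * 4^n)" by (simp add: dist_real_def)
    then have "\<bar>x - c\<bar> * 4^n < 1/3" by (simp add: field_simps)
    moreover have "\<bar>4^n * x - 4^n * c\<bar> = \<bar>x - c\<bar> * 4^n"
    proof -
      have "4^n * x - 4^n * c = (x - c) * 4^n" by (simp add: algebra_simps)
      then show ?thesis by (simp add: abs_mult)
    qed
    ultimately have "\<bar>4^n * x - 4^n * c\<bar> < 1/3" by simp
    then have "4^n*x - 4^n*c < 1/3" "-(1/3) < 4^n*x - 4^n*c" unfolding abs_less_iff by linarith+
    then have "\<lfloor>4^n * x\<rfloor> = \<lfloor>4^n * c\<rfloor>"
      unfolding floor_eq_iff using f by linarith
    then show "real_of_int \<lfloor>4^n * x\<rfloor> = real_of_int \<lfloor>4^n * c\<rfloor>" by simp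
  qed simp
  then have "\<forall>\<^sub>F x in at c. real_of_int \<lfloor>4^n * x\<rfloor> = real_of_int \<lfloor>4^n * c\<rfloor>"
    unfolding eventually_at_filter by (rule eventually_mono) auto
  then show ?thesis unfolding isCont_def by (rule tendsto_eventually)
qed

lemma cont_digit: "continuous_on Scode (\<lambda>c. real_of_int (digit c n))"
proof (rule continuous_at_imp_continuous_on, rule ballI)
  fix c assume c: "c \<in> Scode"
  have e: "(\<lambda>c. real_of_int (digit c n)) = (\<lambda>c. real_of_int \<lfloor>4^(Suc n) * c\<rfloor> - 4 * real_of_int \<lfloor>4^n * c\<rfloor>)"
    unfolding digit_def by auto
  show "isCont (\<lambda>c. real_of_int (digit c n)) c"
    unfolding e by (intro continuous_intros isCont_floor_Scode c)
qed


definition enc :: "(nat \<Rightarrow> real) \<Rightarrow> real" where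
  "enc w = code (\<lambda>n. bitz (w (fst (prod_decode n))) (snd (prod_decode n)))"

definition dec :: "real \<Rightarrow> nat \<Rightarrow> real" where
  "dec c = (\<lambda>k. \<Sum>j. real_of_int (digit c (prod_encode (k, j)) - 1) / 2^(Suc j))"

lemma bits01_enc: "bits01 (\<lambda>n. bitz (w (fst (prod_decode n))) (snd (prod_decode n)))"
  unfolding bits01_def using bitz_01 by blast

lemma enc_Scode: "enc w \<in> Scode"
  unfolding enc_def by (rule code_in_Scode[OF bits01_enc])

lemma dec_enc:
  assumes "\<And>k. 0 \<le> w k" "\<And>k. w k < 1"
  shows "dec (enc w) = w"
proof
  fix k
  have "digit (enc w) (prod_encode (k, j)) - 1 = bitz (w k) j" for j
    unfolding enc_def digit_code[OF bits01_enc] by simp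
  then show "dec (enc w) k = w k"
    unfolding dec_def using sums_unique[OF bin_expansion[OF assms(1,2)[of k]]] by simp
qed

lemma cont_dec: "continuous_on Scode dec"
  unfolding dec_def
proof (intro continuous_on_coordinatewise_then_product)
  fix k
  let ?f = "\<lambda>j c. real_of_int (digit c (prod_encode (k, j)) - 1) / 2^(Suc j)"
  have b: "norm (?f j c) \<le> (1/2)^(Suc j)" if "c \<in> Scode" for j c
  proof -
    have "digit c (prod_encode (k, j)) = 1 \<or> digit c (prod_encode (k, j)) = 2"
      using digit_Scode[OF that] by blast
    then show ?thesis by (auto simp: power_divide)
  qed
  have sm: "summable (\<lambda>j. (1/2::real)^(Suc j))" by simp
  have ul: "uniform_limit Scode (\<lambda>n c. \<Sum>j<n. ?f j c) (\<lambda>c. \<Sum>j. ?f j c) sequentially"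
    by (rule Weierstrass_m_test[OF b sm])
  have cf: "continuous_on Scode (?f j)" for j
  proof -
    have "continuous_on Scode (\<lambda>c. (real_of_int (digit c (prod_encode (k, j))) - 1) / 2^(Suc j))"
      by (intro continuous_intros cont_digit) simp
    then show ?thesis by simp
  qed
  show "continuous_on Scode (\<lambda>c. \<Sum>j. ?f j c)"
    by (rule uniform_limit_theorem[OF _ ul]) (intro always_eventually allI continuous_on_sum cf, simp)
qed

lemma measurable_enc:
  assumes [measurable]: "\<And>k. (\<lambda>x. f x k) \<in> borel_measurable M"
  shows "(\<lambda>x. enc (f x)) \<in> borel_measurable M"
  unfolding enc_def code_def bitz_def by measurable



definition dense_seq :: "(nat \<Rightarrow> 'x::metric_space) \<Rightarrow> bool" where
  "dense_seq q \<longleftrightarrow> (\<forall>x e. 0 < e \<longrightarrow> (\<exists>m. dist x (q m) < e))"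

lemma dense_seq_exists: "\<exists>q::nat \<Rightarrow> 'x::{metric_space,second_countable_topology}. dense_seq q"
proof -
  obtain D :: "'x set" where D: "countable D" "\<And>X. open X \<Longrightarrow> X \<noteq> {} \<Longrightarrow> \<exists>d\<in>D. d \<in> X"
    using countable_dense_setE by blast
  have ne: "D \<noteq> {}" using D(2)[of UNIV] by auto
  have "dense_seq (from_nat_into D)"
    unfolding dense_seq_def
  proof (intro allI impI)
    fix x :: 'x and e :: real assume "0 < e"
    then obtain d where d: "d \<in> D" "d \<in> ball x e" using D(2)[of "ball x e"] by auto
    then obtain m where "from_nat_into D m = d" using range_from_nat_into[OF ne D(1)] by (metis rangeE)
    then show "\<exists>m. dist x (from_nat_into D m) < e" using d by auto
  qed
  then show ?thesis by blast
qed

lemma dense_seq_determines: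
  assumes "dense_seq q" "\<And>m. dist x (q m) = dist y (q m)" shows "x = y"
proof (rule ccontr)
  assume "x \<noteq> y"
  then have "0 < dist x y / 2" by simp
  then obtain m where "dist x (q m) < dist x y / 2" using assms(1) unfolding dense_seq_def by blast
  moreover have "dist x y \<le> dist x (q m) + dist y (q m)" by (rule dist_triangle2)
  ultimately show False using assms(2)[of m] by linarith
qed

definition Psi :: "(nat \<Rightarrow> 'a::metric_space) \<Rightarrow> (nat \<Rightarrow> 'b::real_normed_vector) \<Rightarrow> 'a \<times> 'b \<Rightarrow> nat \<Rightarrow> real" where
  "Psi qa qb p k = (if k = 0 then (1 - norm (snd p)) / 2
     else if odd k then 1 / (2 + dist (fst p) (qa ((k - 1) div 2)))
     else (1 - norm (snd p)) / (2 + norm (snd p - qb ((k - 1) div 2))))"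

lemma two_plus_pos: "0 < 2 + dist a b" "0 < 2 + norm c"
  using zero_le_dist[of a b] norm_ge_zero[of c] by linarith+

lemma cont_Psi: "continuous_on S (Psi qa qb)"
proof (intro continuous_on_coordinatewise_then_product)
  fix k
  show "continuous_on S (\<lambda>p. Psi qa qb p k)"
  proof (cases "k = 0")
    case True then show ?thesis unfolding Psi_def by (simp add: continuous_intros)
  next
    case False
    show ?thesis
    proof (cases "odd k")
      case True
      have "continuous_on S (\<lambda>p. 1 / (2 + dist (fst p) (qa ((k - 1) div 2))))"
        by (intro continuous_intros) (metis two_plus_pos less_irrefl)
      then show ?thesis unfolding Psi_def using True False by simp
    next
      case f2: False
      have "continuous_on S (\<lambda>p. (1 - norm (snd p)) / (2 + norm (snd p - qb ((k - 1) div 2))))"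
        by (intro continuous_intros) (metis two_plus_pos less_irrefl)
      then show ?thesis unfolding Psi_def using f2 False by simp
    qed
  qed
qed

lemma Psi_range:
  assumes "norm (snd p) \<le> 1"
  shows "0 \<le> Psi qa qb p k" "Psi qa qb p k < 1"
proof -
  let ?d = "dist (fst p) (qa ((k - 1) div 2))" and ?e = "norm (snd p - qb ((k - 1) div 2))"
  have a: "0 \<le> 1 - norm (snd p)" "1 - norm (snd p) \<le> 1" using assms by auto
  have d: "0 < 2 + ?d" "0 < 2 + ?e" by (rule two_plus_pos)+
  have "0 \<le> (1 - norm (snd p)) / (2 + ?e)" using a d by simp
  moreover have "1 - norm (snd p) < 2 + ?e" using a(2) norm_ge_zero[of "snd p - qb ((k - 1) div 2)"] by linarith
  then have "(1 - norm (snd p)) / (2 + ?e) < 1" using d by (simp add: divide_less_eq)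
  moreover have "0 \<le> 1 / (2 + ?d)" using d by simp
  moreover have "1 < 2 + ?d" using zero_le_dist[of "fst p" "qa ((k - 1) div 2)"] by linarith
  then have "1 / (2 + ?d) < 1" using d by (simp add: divide_less_eq)
  moreover have m1: "-1 < norm (snd p)" using norm_ge_zero[of "snd p"] by linarith
  then have "1 - norm (snd p) < 2" by linarith
  then have "(1 - norm (snd p)) / 2 < 1" by simp
  moreover have "0 \<le> (1 - norm (snd p)) / 2" using a by simp
  ultimately show "0 \<le> Psi qa qb p k" "Psi qa qb p k < 1" unfolding Psi_def
    by (simp_all only: if_split_asm split: if_split) blast+
qed

lemma Psi_inj:
  assumes "dense_seq qa" "dense_seq qb" "norm v \<le> 1" "norm v' \<le> 1"
    and eq: "Psi qa qb (x, v) = Psi qa qb (x', v')"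
  shows "x = x' \<and> (v = v' \<or> (norm v = 1 \<and> norm v' = 1))"
proof -
  have "dist x (qa m) = dist x' (qa m)" for m
  proof -
    have "Psi qa qb (x, v) (2*m+1) = Psi qa qb (x', v') (2*m+1)" using eq by simp
    then have "1 / (2 + dist x (qa m)) = 1 / (2 + dist x' (qa m))" unfolding Psi_def by simp
    then show ?thesis by (simp add: add_pos_nonneg)
  qed
  then have x: "x = x'" by (rule dense_seq_determines[OF assms(1)])
  have "Psi qa qb (x, v) 0 = Psi qa qb (x', v') 0" using eq by simp
  then have nv: "norm v = norm v'" unfolding Psi_def by simp
  show ?thesis
  proof (cases "norm v = 1")
    case True then show ?thesis using x nv by simp
  next
    case False
    then have pos: "0 < 1 - norm v" using assms(3) by simp
    have "dist v (qb m) = dist v' (qb m)" for m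
    proof -
      have "Psi qa qb (x, v) (2*m+2) = Psi qa qb (x', v') (2*m+2)" using eq by simp
      then have "(1 - norm v) / (2 + norm (v - qb m)) = (1 - norm v) / (2 + norm (v' - qb m))"
        unfolding Psi_def using nv by simp
      then have "2 + norm (v - qb m) = 2 + norm (v' - qb m)"
        using pos by (auto simp: field_simps add_pos_nonneg)
      then show ?thesis by (simp add: dist_norm)
    qed
    then have "v = v'" by (rule dense_seq_determines[OF assms(2)])
    then show ?thesis using x by simp
  qed
qed

lemma Psi_sphere: "norm v = 1 \<Longrightarrow> norm v' = 1 \<Longrightarrow> Psi qa qb (x, v) = Psi qa qb (x, v')"
  unfolding Psi_def by (rule ext) simp

definition ey :: "'b::real_normed_vector \<Rightarrow> 'b" where
  "ey y = y /\<^sub>R (1 + norm y)"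

definition eyinv :: "'b::real_normed_vector \<Rightarrow> 'b" where
  "eyinv v = v /\<^sub>R (1 - norm v)"

lemma norm_ey: "norm (ey y) = norm y / (1 + norm y)"
  unfolding ey_def by (simp add: add_pos_nonneg divide_inverse_commute)

lemma norm_ey_less: "norm (ey y) < 1"
  unfolding norm_ey by (simp add: add_pos_nonneg)

lemma eyinv_ey: "eyinv (ey y) = y"
proof -
  have p: "0 < 1 + norm y" by (simp add: add_pos_nonneg)
  have "1 - norm y / (1 + norm y) = 1 / (1 + norm y)" using p by (simp add: field_simps)
  then show ?thesis unfolding eyinv_def norm_ey unfolding ey_def using p by simp
qed

lemma norm_eyinv: "norm v < 1 \<Longrightarrow> norm (eyinv v) = norm v / (1 - norm v)"
  unfolding eyinv_def by (simp add: divide_inverse_commute)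

lemma ey_eyinv:
  assumes "norm v < 1" shows "ey (eyinv v) = v"
proof -
  have p: "0 < 1 - norm v" using assms by simp
  have "1 + norm v / (1 - norm v) = 1 / (1 - norm v)" using p by (simp add: field_simps)
  then show ?thesis unfolding ey_def norm_eyinv[OF assms] unfolding eyinv_def using p by simp
qed

definition phi :: "(nat \<Rightarrow> 'a::metric_space) \<Rightarrow> (nat \<Rightarrow> 'b::real_normed_vector) \<Rightarrow> 'a \<times> 'b \<Rightarrow> nat \<Rightarrow> real" where
  "phi qa qb z = Psi qa qb (fst z, ey (snd z))"

lemma cont_ey: "continuous_on S ey"
  unfolding ey_def by (intro continuous_intros) (metis add_pos_nonneg norm_ge_zero zero_less_one less_irrefl)

lemma cont_phi: "continuous_on S (phi qa qb)"
proof -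
  have "continuous_on S (\<lambda>z. ey (snd z))"
    by (rule continuous_on_compose2[OF cont_ey[of UNIV]]) (auto intro: continuous_intros)
  then have c1: "continuous_on S (\<lambda>z. (fst z, ey (snd z)))" by (intro continuous_intros)
  show ?thesis unfolding phi_def
    by (rule continuous_on_compose2[OF cont_Psi c1]) auto
qed

lemma phi_inj:
  assumes "dense_seq qa" "dense_seq qb" "phi qa qb z = phi qa qb z'"
  shows "z = z'"
proof -
  have "fst z = fst z' \<and> (ey (snd z) = ey (snd z') \<or> (norm (ey (snd z)) = 1 \<and> norm (ey (snd z')) = 1))"
    by (rule Psi_inj[OF assms(1,2) less_imp_le[OF norm_ey_less] less_imp_le[OF norm_ey_less]])
       (use assms(3) in \<open>simp add: phi_def\<close>)
  then have "fst z = fst z'" "ey (snd z) = ey (snd z')"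
    using norm_ey_less[of "snd z"] by auto
  then have "fst z = fst z'" "snd z = snd z'" using eyinv_ey by metis+
  then show ?thesis by (simp add: prod_eq_iff)
qed

definition Ft :: "('a \<times> 'b::real_normed_vector \<Rightarrow> real) \<Rightarrow> 'a \<times> 'b \<Rightarrow> real" where
  "Ft F p = (if norm (snd p) < 1 then F (fst p, eyinv (snd p)) else 0)"

lemma Ft_ey: "Ft F (x, ey y) = F (x, y)"
  unfolding Ft_def by (simp add: norm_ey_less eyinv_ey)

lemma cont_Ft:
  fixes F :: "'a::metric_space \<times> 'b::real_normed_vector \<Rightarrow> real"
  assumes cF: "continuous_on UNIV F"
    and V: "\<forall>e>0. \<exists>R. \<forall>x y. R \<le> norm y \<longrightarrow> \<bar>F (x, y)\<bar> < e"
  shows "continuous_on (UNIV \<times> cball 0 1) (Ft F)"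
proof (unfold continuous_on_eq_continuous_within, intro ballI)
  let ?S = "(UNIV::'a set) \<times> cball (0::'b) 1"
  fix p assume p: "p \<in> ?S"
  show "continuous (at p within ?S) (Ft F)"
  proof (cases "norm (snd p) < 1")
    case True
    define U where "U = {p :: 'a \<times> 'b. norm (snd p) < 1}"
    have oU: "open U" unfolding U_def by (intro open_Collect_less continuous_intros)
    have ch: "continuous_on U (\<lambda>p. F (fst p, eyinv (snd p)))"
      unfolding eyinv_def
      by (rule continuous_on_compose2[OF cF]) (auto simp: U_def intro!: continuous_intros)
    have "continuous (at p) (\<lambda>p. F (fst p, eyinv (snd p)))"
    proof -
      have "p \<in> U" using True by (simp add: U_def)
      then show ?thesis using ch continuous_on_eq_continuous_at[OF oU] by blast
    qed
    then have "((\<lambda>p. F (fst p, eyinv (snd p))) \<longlongrightarrow> F (fst p, eyinv (snd p))) (at p within ?S)"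
      using continuous_at_imp_continuous_within continuous_within by blast
    then have "(Ft F \<longlongrightarrow> F (fst p, eyinv (snd p))) (at p within ?S)"
      by (rule Lim_transform_within_open[OF _ oU]) (use True in \<open>auto simp: U_def Ft_def\<close>)
    then show ?thesis unfolding continuous_within using True by (simp add: Ft_def)
  next
    case False
    then have n1: "norm (snd p) = 1" using p by auto
    have Fp: "Ft F p = 0" using False by (simp add: Ft_def)
    show ?thesis unfolding continuous_within_eps_delta
    proof (intro allI impI)
      fix e :: real assume "0 < e"
      then obtain R where R: "\<And>x y. R \<le> norm y \<Longrightarrow> \<bar>F (x, y)\<bar> < e" using V by blast
      define R' where "R' = max R 0"
      have R'0: "0 \<le> R'" unfolding R'_def by simp
      show "\<exists>d>0. \<forall>x'\<in>?S. dist x' p < d \<longrightarrow> dist (Ft F x') (Ft F p) < e"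
      proof (intro exI[of _ "1 / (1 + R')"] conjI ballI impI)
        show "0 < 1 / (1 + R')" using R'0 by simp
        fix q assume q: "q \<in> ?S" "dist q p < 1 / (1 + R')"
        have "dist (snd q) (snd p) < 1 / (1 + R')" using dist_snd_le[of q p] q(2) by linarith
        moreover have "norm (snd p) - norm (snd q) \<le> dist (snd q) (snd p)"
          by (metis dist_commute dist_norm norm_triangle_ineq2)
        ultimately have nq: "1 - 1 / (1 + R') < norm (snd q)" using n1 by linarith
        show "dist (Ft F q) (Ft F p) < e"
        proof (cases "norm (snd q) < 1")
          case True
          let ?n = "norm (snd q)"
          have "R' / (1 + R') < ?n" using nq R'0 by (simp add: field_simps)
          then have "R' < ?n * (1 + R')" using R'0 by (simp add: field_simps)
          then have "R' * (1 - ?n) < ?n" by (simp add: algebra_simps)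
          then have "R' \<le> ?n / (1 - ?n)" using True by (simp add: field_simps)
          then have "R \<le> norm (eyinv (snd q))" unfolding norm_eyinv[OF True] R'_def by simp
          then show ?thesis using R[of "eyinv (snd q)" "fst q"] True Fp by (simp add: Ft_def dist_real_def)
        next
          case False
          then show ?thesis using Fp \<open>0 < e\<close> by (simp add: Ft_def)
        qed
      qed
    qed
  qed
qed



lemma portmanteau_closed:
  fixes \<mu> :: "nat \<Rightarrow> real measure" and L :: "real measure"
  assumes \<mu>: "\<And>n. real_distribution (\<mu> n)" and L: "real_distribution L"
    and wc: "weak_conv_m \<mu> L" and T: "closed T"
    and lb: "\<And>n. a \<le> measure (\<mu> n) T"
  shows "a \<le> measure L T"
proof (cases "T = {}")
  case True
  then show ?thesis using lb[of 0] by simp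
next
  case False
  interpret L: real_distribution L by fact
  define f where "f m x = max 0 (1 - real m * infdist x T)" for m x
  have fc: "isCont (f m) x" for m x unfolding f_def by (intro continuous_intros)
  have fb: "norm (f m x) \<le> 1" for m x unfolding f_def using infdist_nonneg[of x T] by auto
  have fge: "indicator T x \<le> f m x" for m x
    unfolding f_def by (auto simp: indicator_def infdist_zero)
  have meas: "f m \<in> borel_measurable borel" for m
    by (intro borel_measurable_continuous_onI continuous_at_imp_continuous_on ballI fc)
  have "a \<le> integral\<^sup>L L (f m)" for m
  proof (rule LIMSEQ_le_const[OF weak_conv_imp_integral_bdd_continuous_conv[OF \<mu> L wc fc fb]], intro exI allI impI)
    fix n
    interpret mu: real_distribution "\<mu> n" by (rule \<mu>)
    have "a \<le> measure (\<mu> n) T" by (rule lb)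
    also have "\<dots> = integral\<^sup>L (\<mu> n) (indicator T)" by simp
    also have "\<dots> \<le> integral\<^sup>L (\<mu> n) (f m)"
      by (intro integral_mono mu.integrable_const_bound[where B=1] fge) (use fb in \<open>auto simp: meas T\<close>)
    finally show "a \<le> integral\<^sup>L (\<mu> n) (f m)" .
  qed
  moreover have "(\<lambda>m. integral\<^sup>L L (f m)) \<longlonglongrightarrow> integral\<^sup>L L (indicator T)"
  proof (rule integral_dominated_convergence[where w="\<lambda>_. 1"])
    show "f m \<in> borel_measurable L" for m using meas by simp
    show "indicator T \<in> borel_measurable L" using T by simp
    show "integrable L (\<lambda>_. 1::real)" by simp
    show "AE x in L. norm (f m x) \<le> 1" for m using fb by simp
    show "AE x in L. (\<lambda>m. f m x) \<longlonglongrightarrow> indicator T x"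
    proof (rule AE_I2)
      fix x
      show "(\<lambda>m. f m x) \<longlonglongrightarrow> indicator T x"
      proof (cases "x \<in> T")
        case True then show ?thesis by (simp add: f_def)
      next
        case nT: False
        then have pos: "0 < infdist x T" using T False in_closed_iff_infdist_zero[of T x] infdist_nonneg[of x T] by auto
        obtain N :: nat where "1 / infdist x T < N" using reals_Archimedean2 by blast
        then have N1: "1 < real N * infdist x T" using pos by (simp add: field_simps)
        have "f m x = 0" if "m \<ge> N" for m
        proof -
          have "real N * infdist x T \<le> real m * infdist x T"
            using that pos by (intro mult_right_mono) auto
          then show ?thesis using N1 unfolding f_def by simp
        qed
        then have "\<forall>m\<ge>N. f m x = 0" by blast
        then have "\<forall>\<^sub>F m in sequentially. f m x = 0" unfolding eventually_sequentially by blast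
        then show ?thesis using nT by (simp add: tendsto_eventually)
      qed
    qed
  qed
  ultimately show ?thesis by (simp add: LIMSEQ_le_const)
qed



lemma int_diff_bound:
  fixes f g :: "'x \<Rightarrow> real"
  assumes N: "finite_measure N" and [measurable]: "f \<in> borel_measurable N" "g \<in> borel_measurable N"
    and fb: "\<And>x. \<bar>f x\<bar> \<le> B" and gb: "\<And>x. \<bar>g x\<bar> \<le> B"
    and A[measurable]: "A \<in> sets N" and eq: "\<And>x. x \<in> space N \<Longrightarrow> x \<notin> A \<Longrightarrow> f x = g x"
  shows "\<bar>integral\<^sup>L N f - integral\<^sup>L N g\<bar> \<le> 2 * B * measure N A"
proof -
  interpret finite_measure N by fact
  have B0: "0 \<le> B" using fb[of undefined] by linarith
  have if_: "integrable N f" by (rule integrable_const_bound[where B=B]) (use fb in auto)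
  have ig: "integrable N g" by (rule integrable_const_bound[where B=B]) (use gb in auto)
  have iA: "integrable N (\<lambda>x. 2 * B * indicator A x :: real)"
    by (rule integrable_const_bound[where B="2*B"]) (use B0 in \<open>auto simp: indicator_def\<close>)
  have "\<bar>integral\<^sup>L N f - integral\<^sup>L N g\<bar> = \<bar>\<integral>x. f x - g x \<partial>N\<bar>"
    using Bochner_Integration.integral_diff[OF if_ ig] by simp
  also have "\<dots> \<le> (\<integral>x. norm (f x - g x) \<partial>N)" using integral_norm_bound[of N "\<lambda>x. f x - g x"] by simp
  also have "\<dots> \<le> (\<integral>x. 2 * B * indicator A x \<partial>N)"
  proof (rule integral_mono)
    show "integrable N (\<lambda>x. norm (f x - g x))" using if_ ig by auto
    show "integrable N (\<lambda>x. 2 * B * indicator A x :: real)" by (rule iA)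
    fix x assume x: "x \<in> space N"
    show "norm (f x - g x) \<le> 2 * B * indicator A x"
    proof (cases "x \<in> A")
      case True then show ?thesis using fb[of x] gb[of x] by simp
    next
      case False then show ?thesis using eq[OF x] by simp
    qed
  qed
  also have "\<dots> = 2 * B * measure N A" using A by (simp add: sets.Int_space_eq2)
  finally show ?thesis .
qed

lemma Ft_fiber:
  assumes "dense_seq qa" "dense_seq qb" "norm v \<le> 1" "norm v' \<le> 1"
    and "Psi qa qb (x, v) = Psi qa qb (x', v')"
  shows "Ft F (x, v) = Ft F (x', v')"
  using Psi_inj[OF assms] unfolding Ft_def by auto



theorem lemma2p1:
  fixes M :: "nat \<Rightarrow> ('a::polish_space \<times> 'b::euclidean_space) measure"
  assumes "\<And>n. prob_space (M n)"
    and "\<And>n. sets (M n) = sets borel"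
    and "uniformly_tight (\<lambda>n. distr (M n) borel fst)"
  shows "\<exists>r l. strict_mono r \<and> subprob_space l \<and> sets l = sets borel \<and> weague_conv (M \<circ> r) l"
proof -
  note probM = assms(1) and setsM = assms(2)
  obtain qa :: "nat \<Rightarrow> 'a" where qa: "dense_seq qa" using dense_seq_exists by blast
  obtain qb :: "nat \<Rightarrow> 'b" where qb: "dense_seq qb" using dense_seq_exists by blast
  define \<Psi> where "\<Psi> = Psi qa qb"
  define \<phi> where "\<phi> = phi qa qb"
  define s where "s z = enc (\<phi> z)" for z
  have spaceM: "space (M n) = UNIV" for n using sets_eq_imp_space_eq[OF setsM[of n]] by simp
  have measM: "measurable (M n) N = measurable borel N" for n and N :: "'c measure"
    by (rule measurable_cong_sets[OF setsM refl])
  have finM: "finite_measure (M n)" for n using probM[of n] by (simp add: prob_space_def)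
  have phi_k: "(\<lambda>z. \<phi> z k) \<in> borel_measurable borel" for k
    unfolding \<phi>_def by (rule borel_measurable_continuous_onI, rule continuous_on_product_then_coordinatewise, rule cont_phi)
  have s_meas: "s \<in> borel_measurable borel"
    unfolding s_def by (rule measurable_enc[OF phi_k])
  have \<phi>_rng: "0 \<le> \<phi> z k" "\<phi> z k < 1" for z k
    unfolding \<phi>_def phi_def using Psi_range[of "(fst z, ey (snd z))"] norm_ey_less[of "snd z"] by auto
  have dec_s: "dec (s z) = \<phi> z" for z unfolding s_def by (rule dec_enc) (use \<phi>_rng in auto)
  have s_S: "s z \<in> Scode" for z unfolding s_def by (rule enc_Scode)
  have \<phi>_\<Psi>: "\<phi> z = \<Psi> (fst z, ey (snd z))" for z unfolding \<phi>_def \<Psi>_def phi_def by simp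
  have \<phi>_inj: "z = z'" if "\<phi> z = \<phi> z'" for z z' using that unfolding \<phi>_def by (rule phi_inj[OF qa qb])
  define \<rho> where "\<rho> n = distr (M n) borel s" for n
  have rd: "real_distribution (\<rho> n)" for n
  proof -
    interpret prob_space "M n" by (rule probM)
    have "prob_space (\<rho> n)" unfolding \<rho>_def by (rule prob_space_distr) (simp add: measM s_meas)
    then show ?thesis unfolding real_distribution_def real_distribution_axioms_def by (simp add: \<rho>_def)
  qed
  have \<rho>_meas: "measure (\<rho> n) A = measure (M n) (s -` A)" if "A \<in> sets borel" for n A
    unfolding \<rho>_def using that by (simp add: measure_distr measM s_meas spaceM)
  have tight: "tight \<rho>"
    unfolding tight_def
  proof (intro conjI allI impI rd)
    fix e :: real assume "0 < e"
    have "measure (\<rho> n) {-1<..1} = 1" for n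
    proof -
      interpret prob_space "M n" by (rule probM)
      have "s -` {-1<..1} = UNIV" using s_S unfolding Scode_def by force
      then show ?thesis using \<rho>_meas[of "{-1<..1}" n] prob_space spaceM by simp
    qed
    then show "\<exists>a b. a < b \<and> (\<forall>n. 1 - e < measure (\<rho> n) {a<..b})"
      using \<open>0<e\<close> by (intro exI[of _ "-1"] exI[of _ 1]) auto
  qed
  obtain r L where r: "strict_mono r" and L: "real_distribution L" and wc: "weak_conv_m (\<rho> \<circ> id \<circ> r) L"
    using tight_imp_convergent_subsubsequence[OF tight, of id] by (auto simp: strict_mono_def)
  interpret L: real_distribution L by (rule L)
  have spaceL: "space L = UNIV" using sets_eq_imp_space_eq[OF L.events_eq_borel] by simp
  have measL: "measurable L N = measurable borel N" for N :: "'c measure"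
    by (rule measurable_cong_sets[OF L.events_eq_borel refl])
  have rd': "real_distribution ((\<rho> \<circ> id \<circ> r) n)" for n using rd by simp
  have "\<forall>j::nat. \<exists>K. compact K \<and> (\<forall>n. measure (distr (M n) borel fst) (UNIV - K) < 1 / Suc j)"
    using assms(3) unfolding uniformly_tight_def by simp
  then obtain K where K: "\<And>j. compact (K j)" "\<And>j n. measure (distr (M n) borel fst) (UNIV - K j) < 1 / Suc j"
    by metis
  have closedK: "closed (K j)" for j using K(1) by (rule compact_imp_closed)
  have KU_sets: "K j \<times> (UNIV :: 'b set) \<in> sets borel" for j by (simp add: borel_closed closed_Times closedK)
  have MK: "1 - 1 / Suc j < measure (M n) (K j \<times> UNIV)" for j n
  proof -
    interpret prob_space "M n" by (rule probM)
    have "fst \<in> borel_measurable (borel :: ('a \<times> 'b) measure)"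
      by (rule borel_measurable_continuous_onI) (intro continuous_intros)
    then have fm: "fst \<in> measurable (M n) borel" by (simp add: measM)
    have "measure (distr (M n) borel fst) (UNIV - K j) = measure (M n) (fst -` (UNIV - K j))"
      using closedK[of j] by (simp add: measure_distr[OF fm] spaceM)
    also have "fst -` (UNIV - K j) = UNIV - K j \<times> UNIV" by auto
    also have "measure (M n) (UNIV - K j \<times> UNIV) = 1 - measure (M n) (K j \<times> UNIV)"
      using prob_compl[of "K j \<times> UNIV"] KU_sets[of j] by (simp add: spaceM setsM)
    finally show ?thesis using K(2)[of n j] by simp
  qed
  have MKc: "measure (M n) (UNIV - K j \<times> UNIV) < 1 / Suc j" for j n
  proof -
    interpret prob_space "M n" by (rule probM)
    have e: "measure (M n) (UNIV - K j \<times> UNIV) = 1 - measure (M n) (K j \<times> UNIV)"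
      using prob_compl[of "K j \<times> UNIV"] KU_sets[of j] by (simp add: spaceM setsM)
    show ?thesis using MK[of j n] unfolding e by linarith
  qed
  define PP where "PP j = K j \<times> cball (0::'b) 1" for j
  define T where "T j = Scode \<inter> dec -` (\<Psi> ` PP j)" for j
  define W where "W j i = Scode \<inter> dec -` (\<Psi> ` (K j \<times> cball (0::'b) (1 - 1 / Suc (Suc i))))" for j i
  define Good where "Good = (\<Union>j. \<Union>i. W j i)"
  have cPsi: "continuous_on A \<Psi>" for A unfolding \<Psi>_def by (rule cont_Psi)
  have cPP: "compact (PP j)" for j unfolding PP_def by (intro compact_Times K(1) compact_cball)
  have closed_img: "closed (\<Psi> ` (K j \<times> cball 0 t))" for j t
    by (intro compact_imp_closed compact_continuous_image cPsi compact_Times K(1) compact_cball)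
  have closedT: "closed (T j)" for j
    unfolding T_def PP_def by (rule continuous_closed_preimage[OF cont_dec closed_Scode closed_img])
  have closedW: "closed (W j i)" for j i
    unfolding W_def by (rule continuous_closed_preimage[OF cont_dec closed_Scode closed_img])
  have W_sets[measurable]: "W j i \<in> sets borel" for j i using closedW by (rule borel_closed)
  have Good_sets[measurable]: "Good \<in> sets borel" unfolding Good_def by measurable
  have T_sets[measurable]: "T j \<in> sets borel" for j using closedT by (rule borel_closed)
  have sT: "s z \<in> T j" if "fst z \<in> K j" for z j
  proof -
    have "(fst z, ey (snd z)) \<in> PP j" using that norm_ey_less[of "snd z"] by (simp add: PP_def less_imp_le)
    then show ?thesis unfolding T_def using s_S dec_s \<phi>_\<Psi> by auto
  qed
  have Wex: "\<exists>z. \<phi> z = dec c" if "c \<in> W j i" for c j i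
  proof -
    from that obtain x v where xv: "x \<in> K j" "norm v \<le> 1 - 1 / Suc (Suc i)" "dec c = \<Psi> (x, v)"
      unfolding W_def by auto
    have "0 < 1 / real (Suc (Suc i))" by simp
    then have "norm v < 1" using xv(2) by linarith
    then have "\<phi> (x, eyinv v) = dec c" using xv(3) by (simp add: \<phi>_\<Psi> ey_eyinv)
    then show ?thesis by blast
  qed
  define Rm where "Rm c = (if c \<in> Good then (SOME z. \<phi> z = dec c) else undefined)" for c
  have Rm_\<phi>: "\<phi> (Rm c) = dec c" if "c \<in> Good" for c
  proof -
    have "\<exists>z. \<phi> z = dec c" using that Wex unfolding Good_def by blast
    then have "\<phi> (SOME z. \<phi> z = dec c) = dec c" by (rule someI_ex)
    then show ?thesis using that unfolding Rm_def by simp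
  qed
  have Rm_cont: "continuous_on (W j i) Rm" for j i
  proof -
    define t where "t = 1 - 1 / real (Suc (Suc i))"
    have t1: "t < 1" unfolding t_def by simp
    define Q where "Q = K j \<times> cball (0::'b) t"
    have cQ: "compact Q" unfolding Q_def by (intro compact_Times K(1) compact_cball)
    have inj: "inj_on \<Psi> Q"
    proof (rule inj_onI)
      fix p p' assume pp: "p \<in> Q" "p' \<in> Q" "\<Psi> p = \<Psi> p'"
      have n: "norm (snd p) \<le> t" "norm (snd p') \<le> t" using pp(1,2) unfolding Q_def by auto
      have "fst p = fst p' \<and> (snd p = snd p' \<or> (norm (snd p) = 1 \<and> norm (snd p') = 1))"
        by (rule Psi_inj[OF qa qb]) (use n t1 pp(3) in \<open>auto simp: \<Psi>_def\<close>)
      then show "p = p'" using n t1 by (auto simp: prod_eq_iff)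
    qed
    have ci: "continuous_on (\<Psi> ` Q) (inv_into Q \<Psi>)"
      by (rule continuous_on_inv[OF cPsi cQ]) (simp add: inv_into_f_f[OF inj])
    define Y where "Y p = (fst p, eyinv (snd p))" for p :: "'a \<times> 'b"
    have cY: "continuous_on Q Y"
      unfolding Y_def eyinv_def by (intro continuous_intros) (use t1 in \<open>auto simp: Q_def\<close>)
    have cdec: "continuous_on (W j i) dec" by (rule continuous_on_subset[OF cont_dec]) (auto simp: W_def)
    have c2: "continuous_on (W j i) (\<lambda>c. inv_into Q \<Psi> (dec c))"
      by (rule continuous_on_compose2[OF ci cdec]) (auto simp: W_def Q_def t_def)
    have comp: "continuous_on (W j i) (\<lambda>c. Y (inv_into Q \<Psi> (dec c)))"
    proof (rule continuous_on_compose2[OF cY c2])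
      show "(\<lambda>c. inv_into Q \<Psi> (dec c)) ` W j i \<subseteq> Q"
      proof (rule image_subsetI)
        fix c assume "c \<in> W j i"
        then have "dec c \<in> \<Psi> ` Q" by (simp add: W_def Q_def t_def)
        then show "inv_into Q \<Psi> (dec c) \<in> Q" by (rule inv_into_into)
      qed
    qed
    have eq: "Y (inv_into Q \<Psi> (dec c)) = Rm c" if "c \<in> W j i" for c
    proof -
      have cG: "c \<in> Good" using that unfolding Good_def by auto
      from that obtain p where p: "p \<in> Q" "dec c = \<Psi> p" unfolding W_def Q_def t_def by auto
      have ip: "inv_into Q \<Psi> (dec c) = p" using p inv_into_f_f[OF inj] by simp
      have "norm (snd p) < 1" using p(1) t1 unfolding Q_def by auto
      then have "\<phi> (Y (inv_into Q \<Psi> (dec c))) = dec c" using p(2) unfolding ip Y_def by (simp add: \<phi>_\<Psi> ey_eyinv)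
      then show ?thesis using Rm_\<phi>[OF cG] \<phi>_inj by metis
    qed
    show ?thesis by (rule continuous_on_eq[OF comp eq])
  qed
  have Rm_meas: "Rm \<in> borel_measurable L"
  proof (rule measurable_piecewise_restrict[of "insert (-Good) (range (\<lambda>(j,i). W j i))"])
    show "countable (insert (- Good) (range (\<lambda>(j, i). W j i)))" by simp
    show "\<Omega> \<inter> space L \<in> sets L" if "\<Omega> \<in> insert (- Good) (range (\<lambda>(j, i). W j i))" for \<Omega>
      using that by (auto simp: spaceL)
    show "space L \<subseteq> \<Union>(insert (- Good) (range (\<lambda>(j, i). W j i)))" by (auto simp: Good_def)
    show "Rm \<in> borel_measurable (restrict_space L \<Omega>)" if Om: "\<Omega> \<in> insert (- Good) (range (\<lambda>(j, i). W j i))" for \<Omega>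
    proof -
      have "continuous_on \<Omega> Rm"
      proof (cases "\<Omega> = - Good")
        case True
        show ?thesis unfolding True by (rule continuous_on_eq[OF continuous_on_const]) (auto simp: Rm_def)
      next
        case False
        then have "\<Omega> \<in> range (\<lambda>(j, i). W j i)" using Om by blast
        then obtain j i where "\<Omega> = W j i" by auto
        then show ?thesis using Rm_cont by simp
      qed
      then have "Rm \<in> borel_measurable (restrict_space borel \<Omega>)" by (rule borel_measurable_continuous_on_restrict)
      moreover have "sets (restrict_space L \<Omega>) = sets (restrict_space borel \<Omega>)" by (simp add: sets_restrict_space)
      ultimately show ?thesis using measurable_cong_sets by blast
    qed
  qed
  define l where "l = distr (restrict_space L Good) borel Rm"
  have Rm_meas': "Rm \<in> measurable (restrict_space L Good) borel" by (rule measurable_restrict_space1[OF Rm_meas])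
  have sets_l: "sets l = sets borel" unfolding l_def by simp
  have subprob: "subprob_space l"
  proof (rule subprob_spaceI)
    have "emeasure l (space l) = emeasure (restrict_space L Good) (Rm -` space l \<inter> space (restrict_space L Good))"
      unfolding l_def by (rule emeasure_distr[OF Rm_meas']) simp
    also have "\<dots> = emeasure (restrict_space L Good) Good" by (simp add: space_restrict_space spaceL l_def)
    also have "\<dots> = emeasure L Good" by (rule emeasure_restrict_space) (simp_all add: spaceL)
    also have "\<dots> \<le> 1" by (rule L.emeasure_le_1)
    finally show "emeasure l (space l) \<le> 1" .
    show "space l \<noteq> {}" by (simp add: l_def)
  qed
  have "weague_conv (M \<circ> r) l"
    unfolding weague_conv_def
  proof (intro allI impI)
    fix F :: "'a \<times> 'b \<Rightarrow> real"
    assume "continuous_on UNIV F \<and> bounded (range F) \<and> (\<forall>e>0. \<exists>R. \<forall>x y. R \<le> norm y \<longrightarrow> \<bar>F (x, y)\<bar> < e)"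
    then have cF: "continuous_on UNIV F" and bF: "bounded (range F)"
      and V: "\<forall>e>0. \<exists>R. \<forall>x y. R \<le> norm y \<longrightarrow> \<bar>F (x, y)\<bar> < e" by auto
    obtain B where B: "\<And>z. \<bar>F z\<bar> \<le> B" using bF unfolding bounded_iff by auto
    have B0: "0 \<le> B" using B[of undefined] by linarith
    have Fm[measurable]: "F \<in> borel_measurable borel" using cF by (rule borel_measurable_continuous_onI)
    have cFt: "continuous_on (UNIV \<times> cball 0 1) (Ft F)" by (rule cont_Ft[OF cF V])
    have Ftb: "\<bar>Ft F p\<bar> \<le> B" for p unfolding Ft_def using B B0 by auto
    have intl: "integral\<^sup>L l F = (\<integral>c. indicator Good c * F (Rm c) \<partial>L)"
      unfolding l_def integral_distr[OF Rm_meas' Fm]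
      by (subst integral_restrict_space) (simp_all add: spaceL)
    define g where "g j c = Ft F (SOME p. p \<in> PP j \<and> \<Psi> p = dec c)" for j c
    have g_eval: "g j c = Ft F p" if "p \<in> PP j" "\<Psi> p = dec c" for j c p
    proof -
      define p' where "p' = (SOME p. p \<in> PP j \<and> \<Psi> p = dec c)"
      have ex: "\<exists>p. p \<in> PP j \<and> \<Psi> p = dec c" using that by blast
      have p': "p' \<in> PP j \<and> \<Psi> p' = dec c" unfolding p'_def by (rule someI_ex[OF ex])
      have "Ft F (fst p', snd p') = Ft F (fst p, snd p)"
      proof (rule Ft_fiber[OF qa qb])
        show "norm (snd p') \<le> 1" using p' by (auto simp: PP_def mem_cball_0 mem_Times_iff)
        show "norm (snd p) \<le> 1" using that(1) by (auto simp: PP_def mem_cball_0 mem_Times_iff)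
        have "\<Psi> p' = \<Psi> p" using p' that(2) by simp
        then show "Psi qa qb (fst p', snd p') = Psi qa qb (fst p, snd p)" by (simp add: \<Psi>_def)
      qed
      then show ?thesis unfolding g_def p'_def[symmetric] by simp
    qed
    have g_cont: "continuous_on (T j) (g j)" for j
      unfolding continuous_on_closed_invariant
    proof (intro allI impI)
      fix C :: "real set" assume C: "closed C"
      define X where "X = \<Psi> ` (PP j \<inter> Ft F -` C)"
      have cpre: "closed (PP j \<inter> Ft F -` C)"
        by (rule continuous_closed_preimage[OF continuous_on_subset[OF cFt] _ C])
           (auto simp: PP_def intro!: closed_Times closedK)
      have "compact (PP j \<inter> Ft F -` C)"
        using compact_Int_closed[OF cPP[of j] cpre] by (simp add: Int_assoc[symmetric])
      then have "closed X" unfolding X_def by (intro compact_imp_closed compact_continuous_image cPsi)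
      then have cA: "closed (T j \<inter> (Scode \<inter> dec -` X))"
        by (intro closed_Int closedT continuous_closed_preimage[OF cont_dec closed_Scode])
      have "T j \<inter> (Scode \<inter> dec -` X) \<inter> T j = g j -` C \<inter> T j"
      proof (intro set_eqI iffI)
        fix c assume c: "c \<in> T j \<inter> (Scode \<inter> dec -` X) \<inter> T j"
        then obtain p where p: "p \<in> PP j" "Ft F p \<in> C" "dec c = \<Psi> p" by (auto simp: X_def)
        then have "g j c = Ft F p" using g_eval by simp
        then show "c \<in> g j -` C \<inter> T j" using p c by auto
      next
        fix c assume c: "c \<in> g j -` C \<inter> T j"
        then obtain p where p: "p \<in> PP j" "dec c = \<Psi> p" by (auto simp: T_def)
        then have "g j c = Ft F p" using g_eval by simp
        then show "c \<in> T j \<inter> (Scode \<inter> dec -` X) \<inter> T j" using c p by (auto simp: X_def T_def)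
      qed
      then show "\<exists>A. closed A \<and> A \<inter> T j = g j -` C \<inter> T j" using cA by blast
    qed
    have GT: "\<exists>G. continuous_on UNIV G \<and> (\<forall>c\<in>T j. G c = g j c) \<and> (\<forall>c. \<bar>G c\<bar> \<le> B)" for j
    proof -
      have gb: "norm (g j c) \<le> B" if "c \<in> T j" for c unfolding g_def using Ftb by simp
      have ci: "closedin (top_of_set UNIV) (T j)" unfolding closedin_closed using closedT[of j] by blast
      show ?thesis
      proof (rule Tietze[OF g_cont[of j] ci B0])
        show "\<And>x. x \<in> T j \<Longrightarrow> norm (g j x) \<le> B" by (rule gb)
      next
        fix G0 assume a: "continuous_on UNIV G0" "\<And>x. x \<in> T j \<Longrightarrow> G0 x = g j x"
          "\<And>x. x \<in> UNIV \<Longrightarrow> norm (G0 x) \<le> B"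
        show ?thesis
        proof (intro exI[of _ G0] conjI ballI allI)
          show "continuous_on UNIV G0" by (rule a(1))
          show "G0 c = g j c" if "c \<in> T j" for c using a(2) that by simp
          show "\<bar>G0 c\<bar> \<le> B" for c using a(3)[of c] by simp
        qed
      qed
    qed
    have "\<exists>G. \<forall>j. continuous_on UNIV (G j) \<and> (\<forall>c\<in>T j. G j c = g j c) \<and> (\<forall>c. \<bar>G j c\<bar> \<le> B)"
      by (rule choice) (rule allI, rule GT)
    then obtain G where G0: "\<forall>j. continuous_on UNIV (G j) \<and> (\<forall>c\<in>T j. G j c = g j c) \<and> (\<forall>c. \<bar>G j c\<bar> \<le> B)"
      by (rule exE)
    have G: "\<And>j. continuous_on UNIV (G j)" "\<And>j c. c \<in> T j \<Longrightarrow> G j c = g j c"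
      "\<And>j c. \<bar>G j c\<bar> \<le> B" using G0 by blast+
    have Gm[measurable]: "G j \<in> borel_measurable borel" for j using G(1) by (rule borel_measurable_continuous_onI)
    have E1: "\<bar>integral\<^sup>L (M n) F - integral\<^sup>L (\<rho> n) (G j)\<bar> \<le> 2 * B / Suc j" for n j
    proof -
      have "integral\<^sup>L (\<rho> n) (G j) = integral\<^sup>L (M n) (\<lambda>z. G j (s z))"
        unfolding \<rho>_def by (rule integral_distr) (simp_all add: measM s_meas)
      moreover have "\<bar>integral\<^sup>L (M n) F - integral\<^sup>L (M n) (\<lambda>z. G j (s z))\<bar> \<le> 2 * B * measure (M n) (UNIV - K j \<times> UNIV)"
      proof (rule int_diff_bound[OF finM])
        show "F \<in> borel_measurable (M n)" by (simp add: measM)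
        show "(\<lambda>z. G j (s z)) \<in> borel_measurable (M n)" unfolding measM by (rule measurable_compose[OF s_meas Gm])
        show "\<bar>F z\<bar> \<le> B" for z by (rule B)
        show "\<bar>G j (s z)\<bar> \<le> B" for z by (rule G(3))
        show "UNIV - K j \<times> UNIV \<in> sets (M n)" using KU_sets[of j] by (simp add: setsM)
        show "F z = G j (s z)" if "z \<notin> UNIV - K j \<times> UNIV" for z
        proof -
          have fz: "fst z \<in> K j" using that by (cases z) auto
          have "G j (s z) = g j (s z)" using G(2)[OF sT[OF fz]] .
          also have "\<dots> = Ft F (fst z, ey (snd z))"
            by (rule g_eval) (use fz norm_ey_less[of "snd z"] in \<open>auto simp: PP_def dec_s \<phi>_\<Psi> less_imp_le\<close>)
          also have "\<dots> = F z" by (simp add: Ft_ey)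
          finally show ?thesis by simp
        qed
      qed
      moreover have "2 * B * measure (M n) (UNIV - K j \<times> UNIV) \<le> 2 * B * (1 / Suc j)"
        using MKc[of n j] B0 by (intro mult_left_mono) auto
      ultimately show ?thesis by simp
    qed
    have E2: "(\<lambda>n. integral\<^sup>L ((\<rho> \<circ> id \<circ> r) n) (G j)) \<longlonglongrightarrow> integral\<^sup>L L (G j)" for j
    proof (rule weak_conv_imp_integral_bdd_continuous_conv[OF rd' L wc])
      show "isCont (G j) x" for x using G(1)[of j] by (simp add: continuous_on_eq_continuous_at)
      show "norm (G j x) \<le> B" for x using G(3) by simp
    qed
    have E3: "\<bar>integral\<^sup>L L (G j) - (\<integral>c. indicator Good c * F (Rm c) \<partial>L)\<bar> \<le> 2 * B / Suc j" for j
    proof -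
      have Tm: "1 - 1 / Suc j \<le> measure L (T j)"
      proof (rule portmanteau_closed[OF rd' L wc closedT])
        fix n
        interpret prob_space "M (r n)" by (rule probM)
        have "1 - 1 / Suc j \<le> measure (M (r n)) (K j \<times> UNIV)" using MK[of j "r n"] by simp
        also have "\<dots> \<le> measure (M (r n)) (s -` T j)"
        proof (rule finite_measure_mono)
          show "K j \<times> UNIV \<subseteq> s -` T j" using sT by auto
          show "s -` T j \<in> sets (M (r n))"
            using measurable_sets[OF s_meas T_sets[of j]] by (simp add: setsM)
        qed
        also have "\<dots> = measure ((\<rho> \<circ> id \<circ> r) n) (T j)" using \<rho>_meas[OF T_sets] by simp
        finally show "1 - 1 / Suc j \<le> measure ((\<rho> \<circ> id \<circ> r) n) (T j)" .
      qed
      have "measure L (UNIV - T j) = 1 - measure L (T j)" using L.prob_compl[of "T j"] by (simp add: spaceL)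
      then have mT: "measure L (UNIV - T j) \<le> 1 / Suc j" using Tm by simp
      have "\<bar>integral\<^sup>L L (G j) - (\<integral>c. indicator Good c * F (Rm c) \<partial>L)\<bar> \<le> 2 * B * measure L (UNIV - T j)"
      proof (rule int_diff_bound)
        show "finite_measure L" by (rule L.finite_measure_axioms)
        show "G j \<in> borel_measurable L" by (simp add: measL)
        show "(\<lambda>c. indicator Good c * F (Rm c)) \<in> borel_measurable L"
          using Rm_meas by (intro borel_measurable_times measurable_compose[OF Rm_meas Fm]) (simp add: measL)
        show "\<bar>G j c\<bar> \<le> B" for c by (rule G(3))
        show "\<bar>indicator Good c * F (Rm c)\<bar> \<le> B" for c using B[of "Rm c"] B0 by (auto simp: indicator_def)
        show "UNIV - T j \<in> sets L" by simp
        show "G j c = indicator Good c * F (Rm c)" if "c \<in> space L" "c \<notin> UNIV - T j" for c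
        proof -
          have cT: "c \<in> T j" using that by simp
          then obtain p where p: "p \<in> PP j" "dec c = \<Psi> p" by (auto simp: T_def)
          have Gc: "G j c = Ft F p" using G(2)[OF cT] g_eval[OF p(1) p(2)[symmetric]] by simp
          show ?thesis
          proof (cases "c \<in> Good")
            case True
            have "Ft F (fst p, snd p) = Ft F (fst (Rm c), ey (snd (Rm c)))"
              by (rule Ft_fiber[OF qa qb])
                 (use p Rm_\<phi>[OF True] norm_ey_less[of "snd (Rm c)"] in \<open>auto simp: PP_def \<Psi>_def \<phi>_\<Psi> less_imp_le\<close>)
            then show ?thesis using Gc True by (simp add: Ft_ey)
          next
            case False
            have "norm (snd p) = 1"
            proof (rule ccontr)
              assume "norm (snd p) \<noteq> 1"
              then have "0 < 1 - norm (snd p)" using p(1) by (auto simp: PP_def)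
              then obtain i where i: "inverse (real (Suc i)) < 1 - norm (snd p)" using reals_Archimedean by blast
              have "1 / real (Suc (Suc i)) \<le> inverse (real (Suc i))" by (simp add: inverse_eq_divide frac_le)
              then have "norm (snd p) \<le> 1 - 1 / Suc (Suc i)" using i by linarith
              then have "c \<in> W j i" using p cT unfolding W_def T_def PP_def by (auto intro!: image_eqI[of _ _ p])
              then show False using False unfolding Good_def by blast
            qed
            then show ?thesis using Gc False by (simp add: Ft_def)
          qed
        qed
      qed
      moreover have "2 * B * measure L (UNIV - T j) \<le> 2 * B * (1 / Suc j)"
        using mT B0 by (intro mult_left_mono) auto
      ultimately show ?thesis by simp
    qed
    show "(\<lambda>n. integral\<^sup>L ((M \<circ> r) n) F) \<longlonglongrightarrow> integral\<^sup>L l F"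
    proof (rule LIMSEQ_I)
      fix e :: real assume e: "0 < e"
      obtain j :: nat where j: "8 * B / e < j" using reals_Archimedean2 by blast
      have jb: "2 * B / Suc j < e / 4"
      proof -
        have "8 * B < e * j" using j e by (simp add: field_simps)
        then have "8 * B < e * Suc j" using e by (simp add: field_simps)
        then show ?thesis by (simp add: field_simps)
      qed
      obtain N where N: "\<And>n. n \<ge> N \<Longrightarrow> norm (integral\<^sup>L ((\<rho> \<circ> id \<circ> r) n) (G j) - integral\<^sup>L L (G j)) < e/2"
        using LIMSEQ_D[OF E2[of j], of "e/2"] e by auto
      show "\<exists>no. \<forall>n\<ge>no. norm (integral\<^sup>L ((M \<circ> r) n) F - integral\<^sup>L l F) < e"
      proof (intro exI allI impI)
        fix n assume "N \<le> n"
        have a: "\<bar>integral\<^sup>L (M (r n)) F - integral\<^sup>L (\<rho> (r n)) (G j)\<bar> \<le> 2 * B / Suc j" by (rule E1)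
        have b: "\<bar>integral\<^sup>L (\<rho> (r n)) (G j) - integral\<^sup>L L (G j)\<bar> < e/2" using N[OF \<open>N \<le> n\<close>] by simp
        have c: "\<bar>integral\<^sup>L L (G j) - integral\<^sup>L l F\<bar> \<le> 2 * B / Suc j" using E3[of j] intl by simp
        have "\<bar>integral\<^sup>L (M (r n)) F - integral\<^sup>L l F\<bar> < e"
          using a b c jb unfolding abs_le_iff abs_less_iff by (elim conjE) (intro conjI; linarith)
        then show "norm (integral\<^sup>L ((M \<circ> r) n) F - integral\<^sup>L l F) < e" by simp
      qed
    qed
  qed
  then show ?thesis using r subprob sets_l by blast
qed


end
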